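(* Let $d \geq 1$ and $j \geq 0$. The space $w_{1^j2}(\mathbb{C}^d)$ is homotopy equivalent to $w_{1^j}(\mathbb{C}^d - pt)$, the configuration space of $j$ unordered distinct points in $\mathbb{C}^d$ with one point removed.
   Context: For a space $X$, $Sym^k(X)$ denotes the quotient of $X^k$ by the permutation action of the symmetric group on $k$ letters. A point of $Sym^k(X)$ determines a partition of $k$ by recording multiplicities of the points appearing in it. For a partition $\lambda$ of $k$, $w_\lambda(X)$ is the subspace of $Sym^k(X)$ of points with associated partition $\lambda$. Here $1^j2$ denotes the partition $1+\cdots+1+2$ of $j+2$ with $j$ ones, and $1^j$ the partition of $j$ into $j$ ones. *)

theory Defs
  imports "HOL-Analysis.Analysis" "HOL-Library.Multiset"
begin

definition quotient_topology :: "'a topology \<Rightarrow> ('a \<Rightarrow> 'b) \<Rightarrow> 'b topology" where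
  "quotient_topology X f =
     topology (\<lambda>U. U \<subseteq> f ` topspace X \<and> openin X {x \<in> topspace X. f x \<in> U})"

definition sym_map :: "nat \<Rightarrow> (nat \<Rightarrow> 'a) \<Rightarrow> 'a multiset" where
  "sym_map k x = image_mset x (mset_set {..<k})"

text \<open>Sym^k(X) = X^k / S_k with the quotient topology; points are multisets of size k.\<close>
definition Sym :: "nat \<Rightarrow> 'a topology \<Rightarrow> 'a multiset topology" where
  "Sym k X = quotient_topology (product_topology (\<lambda>i. X) {..<k}) (sym_map k)"

text \<open>The partition of k determined by a point of Sym^k(X): the multiset of multiplicities.\<close>
definition partition_of :: "'a multiset \<Rightarrow> nat multiset" where
  "partition_of M = image_mset (count M) (mset_set (set_mset M))"

definition w :: "nat multiset \<Rightarrow> 'a topology \<Rightarrow> 'a multiset topology" where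
  "w lam X = subtopology (Sym (sum_mset lam) X) {M. partition_of M = lam}"

end

theory Submission
  imports Defs "HOL-Combinatorics.Permutations"
begin


lemma istop_quot: "istopology (\<lambda>U. U \<subseteq> f ` topspace X \<and> openin X {x \<in> topspace X. f x \<in> U})"
proof -
  have 1: "S \<inter> T \<subseteq> f ` topspace X \<and> openin X {x \<in> topspace X. f x \<in> S \<inter> T}"
    if S: "S \<subseteq> f ` topspace X" "openin X {x \<in> topspace X. f x \<in> S}"
    and T: "T \<subseteq> f ` topspace X" "openin X {x \<in> topspace X. f x \<in> T}" for S T
  proof
    have eq: "{x \<in> topspace X. f x \<in> S \<inter> T} = {x \<in> topspace X. f x \<in> S} \<inter> {x \<in> topspace X. f x \<in> T}" by blast
    show "S \<inter> T \<subseteq> f ` topspace X" using S by blast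
    show "openin X {x \<in> topspace X. f x \<in> S \<inter> T}" unfolding eq using S(2) T(2) by (rule openin_Int)
  qed
  have 2: "\<Union>K \<subseteq> f ` topspace X \<and> openin X {x \<in> topspace X. f x \<in> \<Union>K}"
    if K: "\<forall>U\<in>K. U \<subseteq> f ` topspace X \<and> openin X {x \<in> topspace X. f x \<in> U}" for K
  proof
    have eq: "{x \<in> topspace X. f x \<in> \<Union>K} = \<Union>((\<lambda>U. {x \<in> topspace X. f x \<in> U}) ` K)" by blast
    show "\<Union>K \<subseteq> f ` topspace X" using K by blast
    show "openin X {x \<in> topspace X. f x \<in> \<Union>K}" unfolding eq using K by (intro openin_Union) blast
  qed
  show ?thesis unfolding istopology_def
  proof (rule conjI; intro allI impI)
    fix S T
    assume A: "S \<subseteq> f ` topspace X \<and> openin X {x \<in> topspace X. f x \<in> S}"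
      and B: "T \<subseteq> f ` topspace X \<and> openin X {x \<in> topspace X. f x \<in> T}"
    show "S \<inter> T \<subseteq> f ` topspace X \<and> openin X {x \<in> topspace X. f x \<in> S \<inter> T}"
      by (rule 1[OF conjunct1[OF A] conjunct2[OF A] conjunct1[OF B] conjunct2[OF B]])
  next
    fix K
    assume "\<forall>U\<in>K. U \<subseteq> f ` topspace X \<and> openin X {x \<in> topspace X. f x \<in> U}"
    then show "\<Union>K \<subseteq> f ` topspace X \<and> openin X {x \<in> topspace X. f x \<in> \<Union>K}"
      by (rule 2)
  qed
qed

lemma openin_quot: "openin (quotient_topology X f) U \<longleftrightarrow> U \<subseteq> f ` topspace X \<and> openin X {x \<in> topspace X. f x \<in> U}"
  unfolding quotient_topology_def by (simp add: topology_inverse'[OF istop_quot])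

lemma topspace_quot: "topspace (quotient_topology X f) = f ` topspace X"
proof -
  have "openin (quotient_topology X f) (f ` topspace X)"
  proof -
    have "{x \<in> topspace X. f x \<in> f ` topspace X} = topspace X" by auto
    then show ?thesis by (simp add: openin_quot)
  qed
  then have "f ` topspace X \<subseteq> topspace (quotient_topology X f)" by (rule openin_subset)
  moreover have "topspace (quotient_topology X f) \<subseteq> f ` topspace X"
    using openin_topspace[of "quotient_topology X f"] unfolding openin_quot by blast
  ultimately show ?thesis by blast
qed

lemma quotient_map_quot: "quotient_map X (quotient_topology X f) f"
  unfolding quotient_map_def topspace_quot openin_quot by simp

abbreviation PT :: "nat \<Rightarrow> 'a topology \<Rightarrow> (nat \<Rightarrow> 'a) topology" where
  "PT k X \<equiv> product_topology (\<lambda>i. X) {..<k}"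

lemma quotient_map_sym: "quotient_map (PT k X) (Sym k X) (sym_map k)"
  unfolding Sym_def by (rule quotient_map_quot)

lemma topspace_Sym_img: "topspace (Sym k X) = sym_map k ` topspace (PT k X)"
  unfolding Sym_def by (rule topspace_quot)

lemma sym_map_mset: "sym_map k x = mset (map x [0..<k])"
  by (simp add: sym_map_def atLeast0LessThan)

lemma count_sym_map: "count (sym_map k x) y = card {i\<in>{..<k}. x i = y}"
proof -
  have "count (sym_map k x) y = (\<Sum>i\<in>x -` {y} \<inter> {..<k}. 1)"
    unfolding sym_map_def count_image_mset by (intro sum.cong) auto
  also have "\<dots> = card (x -` {y} \<inter> {..<k})" by simp
  also have "\<dots> = card {i\<in>{..<k}. x i = y}" by (rule arg_cong[where f=card]) auto
  finally show ?thesis .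
qed

lemma size_sym_map [simp]: "size (sym_map k x) = k"
  by (simp add: sym_map_def)

lemma set_sym_map: "set_mset (sym_map k x) = x ` {..<k}"
  by (simp add: sym_map_def)

lemma topspace_Sym: "topspace (Sym k X) = {M. size M = k \<and> set_mset M \<subseteq> topspace X}"
proof (intro set_eqI iffI)
  fix M assume "M \<in> topspace (Sym k X)"
  then obtain x where x: "x \<in> topspace (PT k X)" "M = sym_map k x" unfolding topspace_Sym_img by blast
  have "x ` {..<k} \<subseteq> topspace X" using x(1) by (auto simp: PiE_def Pi_def)
  then show "M \<in> {M. size M = k \<and> set_mset M \<subseteq> topspace X}"
    using x(2) by (simp add: set_sym_map)
next
  fix M assume M: "M \<in> {M. size M = k \<and> set_mset M \<subseteq> topspace X}"
  obtain xs where xs: "mset xs = M" using ex_mset by blast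
  have len: "length xs = k" using M by (simp flip: xs)
  define x where "x = restrict (\<lambda>i. xs ! i) {..<k}"
  have "sym_map k x = mset (map (\<lambda>i. xs ! i) [0..<k])"
    unfolding sym_map_mset x_def by (intro arg_cong[where f=mset] map_cong) auto
  also have "map (\<lambda>i. xs ! i) [0..<k] = xs" by (subst len[symmetric]) (rule map_nth)
  finally have e: "sym_map k x = M" using xs by simp
  have xi: "xs ! i \<in> topspace X" if "i < k" for i
  proof -
    have "xs ! i \<in> set xs" using that len by simp
    then show ?thesis using M xs by auto
  qed
  have "x \<in> topspace (PT k X)"
    unfolding x_def topspace_product_topology restrict_PiE_iff using xi by simp
  then show "M \<in> topspace (Sym k X)" unfolding topspace_Sym_img using e by blast
qed

lemma sym_map_perm:
  assumes "sym_map k x = sym_map k u" "u \<in> extensional {..<k}"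
  obtains p where "p permutes {..<k}" "u = restrict (x \<circ> p) {..<k}"
proof -
  have "mset (map u [0..<k]) = mset (map x [0..<k])" using assms(1) by (simp add: sym_map_mset)
  then obtain p where p: "p permutes {..<length (map x [0..<k])}"
      "permute_list p (map x [0..<k]) = map u [0..<k]"
    using mset_eq_permutation by blast
  have pk: "p permutes {..<k}" using p(1) by simp
  have "u i = x (p i)" if "i < k" for i
  proof -
    have "p i < k" using pk that by (metis lessThan_iff permutes_in_image)
    then have "permute_list p (map x [0..<k]) ! i = x (p i)"
      using that by (simp add: permute_list_def)
    then show ?thesis using p(2) that by simp
  qed
  then have "u = restrict (x \<circ> p) {..<k}" using assms(2)
    by (intro ext) (auto simp: extensional_def restrict_def)
  then show ?thesis using that pk by blast
qed

lemma sym_map_restrict_perm: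
  assumes "p permutes {..<k}"
  shows "sym_map k (restrict (x \<circ> p) {..<k}) = sym_map k x"
proof -
  have "sym_map k (restrict (x \<circ> p) {..<k}) = image_mset (x \<circ> p) (mset_set {..<k})"
    unfolding sym_map_def by (intro image_mset_cong) auto
  also have "\<dots> = image_mset x (image_mset p (mset_set {..<k}))" by (simp add: multiset.map_comp)
  also have "image_mset p (mset_set {..<k}) = mset_set {..<k}"
    using assms by (simp add: image_mset_mset_set permutes_inj_on permutes_image)
  also have "image_mset x (mset_set {..<k}) = sym_map k x" by (simp add: sym_map_def)
  finally show ?thesis .
qed

lemma cont_restrict_perm:
  assumes "p permutes {..<k}"
  shows "continuous_map (PT k X) (PT k X) (\<lambda>x. restrict (x \<circ> p) {..<k})"
  unfolding continuous_map_componentwise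
proof (intro conjI ballI)
  show "(\<lambda>x. restrict (x \<circ> p) {..<k}) ` topspace (PT k X) \<subseteq> extensional {..<k}" by auto
  fix i assume i: "i \<in> {..<k}"
  then have "p i \<in> {..<k}" using assms by (metis permutes_in_image)
  then have "continuous_map (PT k X) X (\<lambda>x. x (p i))" by (rule continuous_map_product_projection)
  then show "continuous_map (PT k X) X (\<lambda>x. restrict (x \<circ> p) {..<k} i)" using i by simp
qed

lemma open_map_sym: "open_map (PT k X) (Sym k X) (sym_map k)"
  unfolding open_map_def
proof (intro allI impI)
  fix U assume U: "openin (PT k X) U"
  have Usub: "U \<subseteq> topspace (PT k X)" using U by (rule openin_subset)
  have eq: "{x \<in> topspace (PT k X). sym_map k x \<in> sym_map k ` U} =
     (\<Union>p\<in>{p. p permutes {..<k}}. {x \<in> topspace (PT k X). restrict (x \<circ> p) {..<k} \<in> U})"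
  proof (intro set_eqI iffI)
    fix x assume "x \<in> {x \<in> topspace (PT k X). sym_map k x \<in> sym_map k ` U}"
    then obtain u where x: "x \<in> topspace (PT k X)" and u: "u \<in> U" "sym_map k x = sym_map k u" by auto
    have "u \<in> extensional {..<k}" using u Usub by (auto simp: PiE_def)
    then obtain p where "p permutes {..<k}" "u = restrict (x \<circ> p) {..<k}"
      using sym_map_perm u(2) by blast
    then show "x \<in> (\<Union>p\<in>{p. p permutes {..<k}}. {x \<in> topspace (PT k X). restrict (x \<circ> p) {..<k} \<in> U})"
      using x u by auto
  next
    fix x assume "x \<in> (\<Union>p\<in>{p. p permutes {..<k}}. {x \<in> topspace (PT k X). restrict (x \<circ> p) {..<k} \<in> U})"
    then obtain p where p: "p permutes {..<k}" and x: "x \<in> topspace (PT k X)" "restrict (x \<circ> p) {..<k} \<in> U"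
      by auto
    then have "sym_map k x = sym_map k (restrict (x \<circ> p) {..<k})" using sym_map_restrict_perm by metis
    then show "x \<in> {x \<in> topspace (PT k X). sym_map k x \<in> sym_map k ` U}" using x by blast
  qed
  have "openin (PT k X) {x \<in> topspace (PT k X). restrict (x \<circ> p) {..<k} \<in> U}" if "p permutes {..<k}" for p
    using openin_continuous_map_preimage[OF cont_restrict_perm[OF that] U] .
  then have "openin (PT k X) (\<Union>p\<in>{p. p permutes {..<k}}. {x \<in> topspace (PT k X). restrict (x \<circ> p) {..<k} \<in> U})"
    by (intro openin_Union) blast
  then have "openin (PT k X) {x \<in> topspace (PT k X). sym_map k x \<in> sym_map k ` U}" unfolding eq .
  moreover have "sym_map k ` U \<subseteq> sym_map k ` topspace (PT k X)" using Usub by blast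
  ultimately show "openin (Sym k X) (sym_map k ` U)"
    unfolding Sym_def openin_quot by blast
qed

lemma quotient_map_sym_sub:
  "quotient_map (subtopology (PT k X) {x \<in> topspace (PT k X). sym_map k x \<in> S})
                (subtopology (Sym k X) S) (sym_map k)"
proof (rule continuous_open_imp_quotient_map)
  have c: "continuous_map (PT k X) (Sym k X) (sym_map k)"
    by (rule quotient_imp_continuous_map[OF quotient_map_sym])
  show "continuous_map (subtopology (PT k X) {x \<in> topspace (PT k X). sym_map k x \<in> S}) (subtopology (Sym k X) S) (sym_map k)"
    by (intro continuous_map_into_subtopology continuous_map_from_subtopology c) auto
  show "open_map (subtopology (PT k X) {x \<in> topspace (PT k X). sym_map k x \<in> S}) (subtopology (Sym k X) S) (sym_map k)"
    by (rule open_map_restriction[OF open_map_sym]) (simp add: topspace_Sym_img)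
  show "sym_map k ` topspace (subtopology (PT k X) {x \<in> topspace (PT k X). sym_map k x \<in> S}) = topspace (subtopology (Sym k X) S)"
    by (auto simp: topspace_Sym_img)
qed



lemma size_as_sum: "size M = sum (count M) (set_mset M)"
  by (simp add: size_multiset_overloaded_eq)

lemma PO_sum: "sum_mset (partition_of M) = size M"
  unfolding partition_of_def size_as_sum by (simp add: sum_unfold_sum_mset)

lemma count_partition: "count (partition_of M) n = card {x \<in> set_mset M. count M x = n}"
proof -
  have "count (partition_of M) n = (\<Sum>y\<in>count M -` {n} \<inter> set_mset M. 1)"
    unfolding partition_of_def count_image_mset by (intro sum.cong) auto
  also have "\<dots> = card {x \<in> set_mset M. count M x = n}"
    by simp (rule arg_cong[where f=card], auto)
  finally show ?thesis .
qed

lemma in_partition: "x \<in># M \<Longrightarrow> count M x \<in># partition_of M"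
  unfolding partition_of_def by simp

lemma PO1: "partition_of M = replicate_mset j 1 \<longleftrightarrow> size M = j \<and> (\<forall>x. count M x \<le> 1)"
proof
  assume A: "partition_of M = replicate_mset j 1"
  have "size M = j" using PO_sum[of M] A by simp
  moreover have "count M x \<le> 1" for x
  proof (cases "x \<in># M")
    case True
    have "count M x \<in># replicate_mset j 1" using in_partition[OF True] unfolding A .
    then show ?thesis by (simp split: if_splits)
  next
    case False then show ?thesis by (simp add: not_in_iff)
  qed
  ultimately show "size M = j \<and> (\<forall>x. count M x \<le> 1)" by blast
next
  assume A: "size M = j \<and> (\<forall>x. count M x \<le> 1)"
  have c1: "count M x = 1" if "x \<in># M" for x
  proof -
    have "count M x > 0" using that by simp
    moreover have "count M x \<le> 1" using A by blast
    ultimately show ?thesis by linarith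
  qed
  have card: "card (set_mset M) = j"
  proof -
    have "size M = sum (\<lambda>_. 1) (set_mset M)" unfolding size_as_sum by (rule sum.cong) (auto simp: c1)
    then show ?thesis using A by simp
  qed
  show "partition_of M = replicate_mset j 1"
  proof (rule multiset_eqI)
    fix n
    show "count (partition_of M) n = count (replicate_mset j 1) n"
    proof (cases "n = 1")
      case True
      have "{x \<in> set_mset M. count M x = n} = set_mset M" using True c1 by auto
      then show ?thesis using True card by (simp add: count_partition)
    next
      case False
      have "{x \<in> set_mset M. count M x = n} = {}" using False c1 by auto
      then show ?thesis using False by (simp add: count_partition)
    qed
  qed
qed

lemma PO2:
  assumes "partition_of M = replicate_mset j 1 + {#2#}"
  shows "size M = j + 2" "\<exists>c. count M c = 2 \<and> (\<forall>x. x \<noteq> c \<longrightarrow> count M x \<le> 1)"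
proof -
  show "size M = j + 2" using PO_sum[of M] assms by simp
  have "card {x \<in> set_mset M. count M x = 2} = 1"
    using count_partition[of M 2] assms by simp
  then obtain c where c: "{x \<in> set_mset M. count M x = 2} = {c}" using card_1_singletonE by blast
  have "count M x \<le> 1" if "x \<noteq> c" for x
  proof (cases "x \<in># M")
    case True
    have "count M x \<in># replicate_mset j 1 + {#2#}" using in_partition[OF True] unfolding assms .
    then have "count M x = 1 \<or> count M x = 2" by (auto split: if_splits)
    moreover have "count M x \<noteq> 2" using c that True by blast
    ultimately show ?thesis by linarith
  next
    case False then show ?thesis by (simp add: not_in_iff)
  qed
  moreover have "count M c = 2" using c by blast
  ultimately show "\<exists>c. count M c = 2 \<and> (\<forall>x. x \<noteq> c \<longrightarrow> count M x \<le> 1)" by blast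
qed

lemma PO2_conv:
  assumes "count M c = 2" "\<forall>x. x \<noteq> c \<longrightarrow> count M x \<le> 1" "size M = j + 2"
  shows "partition_of M = replicate_mset j 1 + {#2#}"
proof -
  have cM: "c \<in># M" using assms(1) by (simp add: count_greater_zero_iff[symmetric])
  have c1: "count M x = 1" if "x \<in># M" "x \<noteq> c" for x
  proof -
    have "count M x > 0" using that by simp
    moreover have "count M x \<le> 1" using assms(2) that by blast
    ultimately show ?thesis by linarith
  qed
  have "size M = count M c + sum (count M) (set_mset M - {c})"
    unfolding size_as_sum using cM by (simp add: sum.remove)
  also have "\<dots> = 2 + sum (count M) (set_mset M - {c})" using assms(1) by simp
  also have "sum (count M) (set_mset M - {c}) = sum (\<lambda>_. 1) (set_mset M - {c})"
    by (rule sum.cong) (auto simp: c1)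
  finally have card: "card (set_mset M - {c}) = j" using assms(3) by simp
  show ?thesis
  proof (rule multiset_eqI)
    fix n
    show "count (partition_of M) n = count (replicate_mset j 1 + {#2#}) n"
    proof -
      consider "n = 1" | "n = 2" | "n \<noteq> 1" "n \<noteq> 2" by blast
      then show ?thesis
      proof cases
        case 1
        have "{x \<in> set_mset M. count M x = n} = set_mset M - {c}" using 1 c1 assms(1) by auto
        then show ?thesis using 1 card by (simp add: count_partition)
      next
        case 2
        have "{x \<in> set_mset M. count M x = n} = {c}" using 2 c1 assms(1) cM by force
        then show ?thesis using 2 by (simp add: count_partition)
      next
        case 3
        have "{x \<in> set_mset M. count M x = n} = {}" using 3 c1 assms(1) by auto
        then show ?thesis using 3 by (simp add: count_partition)
      qed
    qed
  qed
qed

lemma count_image_inj: "inj h \<Longrightarrow> count (image_mset h M) (h x) = count M x"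
proof -
  assume h: "inj h"
  have "h -` {h x} = {x}" using h by (auto dest: injD)
  then show ?thesis unfolding count_image_mset
    by (cases "x \<in># M") (auto simp: not_in_iff)
qed

lemma PO_inj: "inj h \<Longrightarrow> partition_of (image_mset h M) = partition_of M"
proof -
  assume h: "inj h"
  have "partition_of (image_mset h M) = image_mset (count (image_mset h M)) (mset_set (h ` set_mset M))"
    by (simp add: partition_of_def)
  also have "mset_set (h ` set_mset M) = image_mset h (mset_set (set_mset M))"
    using h by (simp add: image_mset_mset_set inj_on_subset)
  also have "image_mset (count (image_mset h M)) (image_mset h (mset_set (set_mset M))) =
      image_mset (count M) (mset_set (set_mset M))"
    by (simp add: multiset.map_comp comp_def count_image_inj[OF h])
  finally show ?thesis by (simp add: partition_of_def)
qed



lemma cont_local: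
  assumes "\<And>x. x \<in> topspace X \<Longrightarrow> \<exists>U. openin X U \<and> x \<in> U \<and> continuous_map (subtopology X U) Z h"
  shows "continuous_map X Z h"
  unfolding continuous_map_def
proof (intro conjI allI impI)
  show "h \<in> topspace X \<rightarrow> topspace Z"
  proof
    fix x assume x: "x \<in> topspace X"
    then obtain U where U: "openin X U" "x \<in> U" "continuous_map (subtopology X U) Z h" using assms by blast
    then have "x \<in> topspace (subtopology X U)" using x by simp
    then show "h x \<in> topspace Z" using continuous_map_image_subset_topspace[OF U(3)] by blast
  qed
  fix V assume V: "openin Z V"
  show "openin X {x \<in> topspace X. h x \<in> V}"
  proof (subst openin_subopen, intro ballI)
    fix x assume "x \<in> {x \<in> topspace X. h x \<in> V}"
    then have x: "x \<in> topspace X" "h x \<in> V" by auto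
    then obtain U where U: "openin X U" "x \<in> U" "continuous_map (subtopology X U) Z h" using assms by blast
    have "openin (subtopology X U) {y \<in> topspace (subtopology X U). h y \<in> V}"
      using U(3) V by (rule openin_continuous_map_preimage)
    then have o: "openin X {y \<in> topspace (subtopology X U). h y \<in> V}" using U(1) by (rule openin_trans_full)
    show "\<exists>T. openin X T \<and> x \<in> T \<and> T \<subseteq> {x \<in> topspace X. h x \<in> V}"
      by (rule exI[of _ "{y \<in> topspace (subtopology X U). h y \<in> V}"]) (use o x U in auto)
  qed
qed

definition dbl :: "'a multiset \<Rightarrow> 'a" where "dbl M = (THE c. count M c = 2)"

lemma dbl_eq: "count M c = 2 \<Longrightarrow> \<forall>x. x \<noteq> c \<longrightarrow> count M x \<le> 1 \<Longrightarrow> dbl M = c"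
  unfolding dbl_def
proof (rule the_equality)
  fix y assume "\<forall>x. x \<noteq> c \<longrightarrow> count M x \<le> 1" "count M y = 2"
  then show "y = c" by (cases "y = c") auto
qed

lemma K2:
  assumes c2: "count (sym_map k x) c = 2" and c1: "\<forall>y. y \<noteq> c \<longrightarrow> count (sym_map k x) y \<le> 1"
    and ab: "a < k" "b < k" "a \<noteq> b" "x a = x b"
  shows "x a = c" "{l\<in>{..<k}. x l = c} = {a, b}"
proof -
  have sub: "{a, b} \<subseteq> {l\<in>{..<k}. x l = x a}" using ab by auto
  have "card {a, b} = 2" using ab by simp
  then have ge: "card {l\<in>{..<k}. x l = x a} \<ge> 2"
    using card_mono[OF _ sub] by simp
  show xa: "x a = c"
  proof (rule ccontr)
    assume "x a \<noteq> c"
    then have "count (sym_map k x) (x a) \<le> 1" using c1 by blast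
    then show False using ge by (simp add: count_sym_map)
  qed
  have "card {l\<in>{..<k}. x l = c} = 2" using c2 by (simp add: count_sym_map)
  then show "{l\<in>{..<k}. x l = c} = {a, b}"
    using sub xa \<open>card {a, b} = 2\<close> by (intro card_subset_eq[symmetric]) auto
qed

lemma K1:
  assumes c2: "count (sym_map k x) c = 2"
  obtains a b where "a < k" "b < k" "a \<noteq> b" "x a = x b"
proof -
  have "card {l\<in>{..<k}. x l = c} = 2" using c2 by (simp add: count_sym_map)
  then obtain a b where e: "{l\<in>{..<k}. x l = c} = {a, b}" and ab: "a \<noteq> b"
    unfolding card_2_iff by blast
  have "a \<in> {l\<in>{..<k}. x l = c}" "b \<in> {l\<in>{..<k}. x l = c}" unfolding e by simp_all
  then have "a < k" "b < k" "x a = x b" by simp_all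
  then show ?thesis using that ab by blast
qed

lemma K3:
  assumes c2: "count (sym_map k x) c = 2" and c1: "\<forall>y. y \<noteq> c \<longrightarrow> count (sym_map k x) y \<le> 1"
    and ab: "a < k" "b < k" "a \<noteq> b" "x a = x b"
    and ii: "i < k" "i' < k" "i \<noteq> i'" "x i = x i'"
  shows "{i, i'} = {a, b}"
proof -
  note e1 = K2(2)[OF c2 c1 ab] and e2 = K2(2)[OF c2 c1 ii]
  show ?thesis by (subst e2[symmetric], rule e1)
qed

abbreviation LA :: "nat \<Rightarrow> nat multiset" where "LA j \<equiv> replicate_mset j 1 + {#2#}"

definition PreA :: "nat \<Rightarrow> (nat \<Rightarrow> 'a::real_normed_vector) set" where
  "PreA j = {x \<in> topspace (PT (j+2) euclidean). partition_of (sym_map (j+2) x) = LA j}"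

lemma wA: "w (LA j) (euclidean :: 'a::real_normed_vector topology) =
   subtopology (Sym (j+2) euclidean) {M. partition_of M = LA j}"
  unfolding w_def by simp

lemma topA: "topspace (w (LA j) (euclidean :: 'a::real_normed_vector topology)) =
   {M. size M = j + 2 \<and> partition_of M = LA j}"
  unfolding wA by (auto simp: topspace_Sym)

lemma topB: "topspace (w (replicate_mset j 1) (subtopology euclidean (UNIV - {p::'a::real_normed_vector}))) =
   {N. size N = j \<and> p \<notin># N \<and> partition_of N = replicate_mset j 1}"
  unfolding w_def by (auto simp: topspace_Sym)

lemma good_PO2:
  assumes "partition_of M = LA j"
  shows "count M (dbl M) = 2" "\<forall>y. y \<noteq> dbl M \<longrightarrow> count M y \<le> 1"
proof -
  obtain c where c: "count M c = 2" "\<forall>x. x \<noteq> c \<longrightarrow> count M x \<le> 1" using PO2(2)[OF assms] by blast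
  then have "dbl M = c" by (rule dbl_eq)
  then show "count M (dbl M) = 2" "\<forall>y. y \<noteq> dbl M \<longrightarrow> count M y \<le> 1" using c by simp_all
qed

definition UA :: "nat \<Rightarrow> nat \<Rightarrow> nat \<Rightarrow> (nat \<Rightarrow> 'a::real_normed_vector) set" where
  "UA j a b = {x \<in> PreA j. x a = x b}"

lemma PreA_sub: "PreA j \<subseteq> topspace (PT (j+2) euclidean)"
  unfolding PreA_def by blast

lemma dbl_UA:
  assumes "x \<in> UA j a b" "a < j+2" "b < j+2" "a \<noteq> b"
  shows "dbl (sym_map (j+2) x) = x a"
proof -
  have x: "partition_of (sym_map (j+2) x) = LA j" "x a = x b" using assms(1) by (auto simp: UA_def PreA_def)
  show ?thesis using K2(1)[OF good_PO2[OF x(1)] assms(2-4) x(2)] by simp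
qed

lemma open_neq: "openin (PT k (euclidean :: 'a::real_normed_vector topology)) {x \<in> topspace (PT k euclidean). x i \<noteq> x i'}"
  if "i < k" "i' < k" for i i'
proof -
  have c: "continuous_map (PT k euclidean) euclidean (\<lambda>x::nat\<Rightarrow>'a. x i - x i')"
    using that by (intro continuous_map_diff continuous_map_product_projection) auto
  have "openin (PT k euclidean) {x \<in> topspace (PT k euclidean). x i - x i' \<in> - {0::'a}}"
    by (rule openin_continuous_map_preimage[OF c]) auto
  then show ?thesis by simp
qed

lemma UA_open:
  assumes ab: "a < j+2" "b < j+2" "a \<noteq> b"
  shows "openin (subtopology (PT (j+2) (euclidean :: 'a::real_normed_vector topology)) (PreA j)) (UA j a b)"
proof -
  define Pairs where "Pairs = {(i, i'). i < j+2 \<and> i' < j+2 \<and> i \<noteq> i' \<and> {i, i'} \<noteq> {a, b}}"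
  define D where "D = \<Inter>(insert (topspace (PT (j+2) (euclidean :: 'a topology)))
      ((\<lambda>(i,i'). {x \<in> topspace (PT (j+2) euclidean). x i \<noteq> x i'}) ` Pairs))"
  have finP: "finite Pairs"
    by (rule finite_subset[of _ "{..<j+2} \<times> {..<j+2}"]) (auto simp: Pairs_def)
  have oD: "openin (PT (j+2) euclidean) D"
    unfolding D_def
  proof (rule openin_Inter)
    show "finite (insert (topspace (PT (j+2) euclidean)) ((\<lambda>(i,i'). {x \<in> topspace (PT (j+2) (euclidean :: 'a topology)). x i \<noteq> x i'}) ` Pairs))"
      using finP by simp
    show "insert (topspace (PT (j+2) euclidean)) ((\<lambda>(i,i'). {x \<in> topspace (PT (j+2) (euclidean :: 'a topology)). x i \<noteq> x i'}) ` Pairs) \<noteq> {}"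
      by simp
    fix S assume "S \<in> insert (topspace (PT (j+2) euclidean)) ((\<lambda>(i,i'). {x \<in> topspace (PT (j+2) (euclidean :: 'a topology)). x i \<noteq> x i'}) ` Pairs)"
    then show "openin (PT (j+2) euclidean) S"
    proof
      assume "S = topspace (PT (j+2) euclidean)" then show ?thesis by (simp del: topspace_product_topology)
    next
      assume "S \<in> (\<lambda>(i,i'). {x \<in> topspace (PT (j+2) (euclidean :: 'a topology)). x i \<noteq> x i'}) ` Pairs"
      then obtain z where z: "z \<in> Pairs" "S = (\<lambda>(i,i'). {x \<in> topspace (PT (j+2) (euclidean :: 'a topology)). x i \<noteq> x i'}) z" by blast
      obtain i i' where "z = (i, i')" by (cases z)
      then have "(i,i') \<in> Pairs" "S = {x \<in> topspace (PT (j+2) euclidean). x i \<noteq> x i'}" using z by simp_all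
      then show ?thesis using open_neq[of i "j+2" i'] by (simp add: Pairs_def)
    qed
  qed
  have eq: "UA j a b = PreA j \<inter> D"
  proof (intro set_eqI iffI)
    fix x :: "nat \<Rightarrow> 'a" assume x: "x \<in> UA j a b"
    then have xP: "x \<in> PreA j" and xab: "x a = x b" by (auto simp: UA_def)
    have po: "partition_of (sym_map (j+2) x) = LA j" using xP by (simp add: PreA_def)
    have "x i \<noteq> x i'" if "(i, i') \<in> Pairs" for i i'
    proof
      assume "x i = x i'"
      then have "{i, i'} = {a, b}" using K3[OF good_PO2[OF po] ab xab] that by (auto simp: Pairs_def)
      then show False using that by (simp add: Pairs_def)
    qed
    note neq = this
    have xt: "x \<in> topspace (PT (j+2) euclidean)" using xP PreA_sub by blast
    have "x \<in> D" unfolding D_def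
    proof (rule InterI)
      fix S assume "S \<in> insert (topspace (PT (j+2) euclidean)) ((\<lambda>(i,i'). {x \<in> topspace (PT (j+2) (euclidean :: 'a topology)). x i \<noteq> x i'}) ` Pairs)"
      then show "x \<in> S"
      proof
        assume "S = topspace (PT (j+2) euclidean)" then show ?thesis using xt by simp
      next
        assume "S \<in> (\<lambda>(i,i'). {x \<in> topspace (PT (j+2) (euclidean :: 'a topology)). x i \<noteq> x i'}) ` Pairs"
        then obtain z where z: "z \<in> Pairs" "S = (\<lambda>(i,i'). {x \<in> topspace (PT (j+2) (euclidean :: 'a topology)). x i \<noteq> x i'}) z" by blast
        obtain i i' where "z = (i, i')" by (cases z)
        then have "(i,i') \<in> Pairs" "S = {x \<in> topspace (PT (j+2) euclidean). x i \<noteq> x i'}" using z by simp_all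
        then show ?thesis using neq xt by simp
      qed
    qed
    then show "x \<in> PreA j \<inter> D" using xP by blast
  next
    fix x :: "nat \<Rightarrow> 'a" assume x: "x \<in> PreA j \<inter> D"
    have po: "partition_of (sym_map (j+2) x) = LA j" using x by (simp add: PreA_def)
    obtain i i' where ii: "i < j+2" "i' < j+2" "i \<noteq> i'" "x i = x i'"
      using K1[OF good_PO2(1)[OF po]] by blast
    have "(i, i') \<notin> Pairs"
    proof
      assume "(i, i') \<in> Pairs"
      then have "x i \<noteq> x i'" using x unfolding D_def by blast
      then show False using ii by simp
    qed
    then have "{i, i'} = {a, b}" using ii by (simp add: Pairs_def)
    then have "x a = x b" using ii by (auto simp: doubleton_eq_iff)
    then show "x \<in> UA j a b" using x by (simp add: UA_def)
  qed
  show ?thesis unfolding eq openin_subtopology using oD by blast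
qed

lemma subtop_UA: "subtopology (subtopology (PT (j+2) (euclidean :: 'a::real_normed_vector topology)) (PreA j)) (UA j a b) = subtopology (PT (j+2) euclidean) (UA j a b)"
proof -
  have "PreA j \<inter> UA j a b = (UA j a b :: (nat \<Rightarrow> 'a) set)" by (auto simp: UA_def)
  then show ?thesis by (simp add: subtopology_subtopology)
qed

lemma UA_cover:
  assumes "x \<in> PreA j"
  obtains a b where "a < j+2" "b < j+2" "a \<noteq> b" "x \<in> UA j a b"
proof -
  have po: "partition_of (sym_map (j+2) x) = LA j" using assms by (simp add: PreA_def)
  obtain a b where ab: "a < j+2" "b < j+2" "a \<noteq> b" "x a = x b"
    using K1[OF good_PO2(1)[OF po]] by blast
  then show ?thesis using that assms by (simp add: UA_def)
qed

lemma C_cont: "continuous_map (subtopology (PT (j+2) (euclidean :: 'a::real_normed_vector topology)) (PreA j)) euclidean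
   (\<lambda>x. dbl (sym_map (j+2) x))"
proof (rule cont_local)
  fix x :: "nat \<Rightarrow> 'a" assume "x \<in> topspace (subtopology (PT (j+2) euclidean) (PreA j))"
  then have xP: "x \<in> PreA j" by simp
  obtain a b where ab: "a < j+2" "b < j+2" "a \<noteq> b" "x \<in> UA j a b" using UA_cover[OF xP] by blast
  have "continuous_map (subtopology (PT (j+2) euclidean) (UA j a b)) euclidean (\<lambda>x::nat\<Rightarrow>'a. x a)"
    using ab by (intro continuous_map_from_subtopology continuous_map_product_projection) simp
  then have "continuous_map (subtopology (PT (j+2) euclidean) (UA j a b)) euclidean (\<lambda>x::nat\<Rightarrow>'a. dbl (sym_map (j+2) x))"
  proof (rule continuous_map_eq)
    fix y assume "y \<in> topspace (subtopology (PT (j+2) (euclidean :: 'a topology)) (UA j a b))"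
    then have "y \<in> UA j a b" by simp
    then have "dbl (sym_map (j+2) y) = y a" by (rule dbl_UA[OF _ ab(1-3)])
    then show "y a = dbl (sym_map (j+2) y)" by simp
  qed
  note cc = this
  show "\<exists>U. openin (subtopology (PT (j+2) euclidean) (PreA j)) U \<and> x \<in> U \<and>
    continuous_map (subtopology (subtopology (PT (j+2) euclidean) (PreA j)) U) euclidean (\<lambda>x. dbl (sym_map (j+2) x))"
  proof (intro exI[of _ "UA j a b"] conjI)
    show "openin (subtopology (PT (j+2) euclidean) (PreA j)) (UA j a b)" by (rule UA_open[OF ab(1-3)])
    show "x \<in> UA j a b" by (rule ab(4))
    show "continuous_map (subtopology (subtopology (PT (j+2) euclidean) (PreA j)) (UA j a b)) euclidean (\<lambda>x::nat\<Rightarrow>'a. dbl (sym_map (j+2) x))"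
      unfolding subtop_UA by (rule cc)
  qed
qed



lemma mset_set_split2:
  fixes a b k :: nat
  assumes "a < k" "b < k" "a \<noteq> b"
  shows "mset_set {..<k} = mset_set ({..<k} - {a,b}) + {#a, b#}"
proof -
  have e: "{..<k} = insert a (insert b ({..<k} - {a,b}))" using assms by auto
  have "mset_set {..<k} = mset_set (insert a (insert b ({..<k}-{a,b})))" by (subst e[symmetric]) (rule refl)
  also have "\<dots> = add_mset a (add_mset b (mset_set ({..<k} - {a,b})))" using assms by (simp add: mset_set.insert)
  finally show ?thesis by simp
qed

lemma mset_sorted: "finite A \<Longrightarrow> mset (sorted_list_of_set A) = mset_set A"
  by (simp flip: sorted_list_of_mset_set)

definition fmap :: "'a::real_normed_vector \<Rightarrow> 'a multiset \<Rightarrow> 'a multiset" where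
  "fmap p M = image_mset (\<lambda>y. y - dbl M + p) (M - {#dbl M, dbl M#})"

lemma fmap_UA:
  fixes x :: "nat \<Rightarrow> 'a::real_normed_vector"
  assumes x: "x \<in> UA j a b" and ab: "a < j+2" "b < j+2" "a \<noteq> b"
  defines "L \<equiv> sorted_list_of_set ({..<j+2} - {a,b})"
  shows "fmap p (sym_map (j+2) x) = sym_map j (restrict (\<lambda>i. x (L!i) - x a + p) {..<j})"
proof -
  have d: "dbl (sym_map (j+2) x) = x a" by (rule dbl_UA[OF x ab])
  have xab: "x a = x b" using x by (simp add: UA_def)
  have lenL: "length L = j"
  proof -
    have "card ({..<j+2} - {a,b}) = j" using ab by (simp add: card_Diff_subset)
    then show ?thesis unfolding L_def by simp
  qed
  have mL: "mset L = mset_set ({..<j+2} - {a,b})" unfolding L_def by (simp add: mset_sorted)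
  have "sym_map (j+2) x = image_mset x (mset_set ({..<j+2} - {a,b})) + {#x a, x a#}"
    unfolding sym_map_def mset_set_split2[OF ab] using xab by simp
  then have "sym_map (j+2) x - {#x a, x a#} = mset (map x L)" using mL by simp
  then have "fmap p (sym_map (j+2) x) = mset (map (\<lambda>y. y - x a + p) (map x L))"
    unfolding fmap_def d by (simp add: multiset.map_comp)
  also have "map (\<lambda>y. y - x a + p) (map x L) = map (\<lambda>i. x (L!i) - x a + p) [0..<j]"
  proof -
    have "map (\<lambda>i. x (L!i) - x a + p) [0..<j] = map (\<lambda>y. y - x a + p) (map x (map (\<lambda>i. L!i) [0..<length L]))"
      using lenL by simp
    also have "map (\<lambda>i. L!i) [0..<length L] = L" by (rule map_nth)
    finally show ?thesis by simp
  qed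
  also have "mset (map (\<lambda>i. x (L!i) - x a + p) [0..<j]) = sym_map j (restrict (\<lambda>i. x (L!i) - x a + p) {..<j})"
    unfolding sym_map_mset by (intro arg_cong[where f=mset] map_cong) auto
  finally show ?thesis .
qed

lemma fmap_top:
  fixes p :: "'a::real_normed_vector"
  assumes M: "M \<in> topspace (w (LA j) (euclidean :: 'a topology))"
  shows "fmap p M \<in> topspace (w (replicate_mset j 1) (subtopology euclidean (UNIV - {p})))"
proof -
  have M': "size M = j + 2" "partition_of M = LA j" using M unfolding topA by auto
  define c where "c = dbl M"
  have c2: "count M c = 2" and c1: "\<forall>y. y \<noteq> c \<longrightarrow> count M y \<le> 1"
    using good_PO2[OF M'(2)] by (simp_all add: c_def)
  define N where "N = M - {#c, c#}"
  have sub: "{#c, c#} \<subseteq># M" using c2 by (simp add: subseteq_mset_def)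
  have sN: "size N = j" using M'(1) sub by (simp add: N_def size_Diff_submset)
  have cN: "count N y = (if y = c then 0 else count M y)" for y
    using c2 by (simp add: N_def)
  have pN: "partition_of N = replicate_mset j 1"
    unfolding PO1 using sN cN c1 by simp
  have inj: "inj (\<lambda>y::'a. y - c + p)" by (rule injI) simp
  have f: "fmap p M = image_mset (\<lambda>y. y - c + p) N" by (simp add: fmap_def N_def c_def)
  have "c \<notin># N" using cN by (simp add: not_in_iff)
  then have "p \<notin># fmap p M" unfolding f by auto
  moreover have "size (fmap p M) = j" unfolding f using sN by simp
  moreover have "partition_of (fmap p M) = replicate_mset j 1" unfolding f PO_inj[OF inj] by (rule pN)
  ultimately show ?thesis unfolding topB by blast
qed

lemma T_cont:
  fixes p :: "'a::real_normed_vector"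
  assumes ab: "a < j+2" "b < j+2" "a \<noteq> b"
  defines "L \<equiv> sorted_list_of_set ({..<j+2} - {a,b})"
  shows "continuous_map (subtopology (PT (j+2) (euclidean :: 'a topology)) (UA j a b))
            (PT j (subtopology euclidean (UNIV - {p}))) (\<lambda>x. restrict (\<lambda>i. x (L!i) - x a + p) {..<j})"
  unfolding continuous_map_componentwise
proof (intro conjI ballI)
  show "(\<lambda>x. restrict (\<lambda>i. x (L!i) - x a + p) {..<j}) ` topspace (subtopology (PT (j+2) (euclidean :: 'a topology)) (UA j a b)) \<subseteq> extensional {..<j}"
    by auto
  fix i assume i: "i \<in> {..<j}"
  have lenL: "length L = j"
  proof -
    have "card ({..<j+2} - {a,b}) = j" using ab by (simp add: card_Diff_subset)
    then show ?thesis unfolding L_def by simp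
  qed
  have Li: "L!i \<in> {..<j+2} - {a,b}"
  proof -
    have "L!i \<in> set L" using i lenL by simp
    then show ?thesis unfolding L_def by simp
  qed
  have c: "continuous_map (subtopology (PT (j+2) (euclidean :: 'a topology)) (UA j a b)) euclidean (\<lambda>x. x (L!i) - x a + p)"
    using Li ab by (intro continuous_map_add continuous_map_diff continuous_map_from_subtopology continuous_map_product_projection) auto
  have ne: "x (L!i) - x a + p \<in> UNIV - {p}" if x: "x \<in> topspace (subtopology (PT (j+2) (euclidean :: 'a topology)) (UA j a b))" for x
  proof -
    have xU: "x \<in> UA j a b" using x by simp
    then have po: "partition_of (sym_map (j+2) x) = LA j" and xab: "x a = x b" by (simp_all add: UA_def PreA_def)
    have "x (L!i) \<noteq> x a"
    proof
      assume e: "x (L!i) = x a"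
      have n: "L!i \<noteq> a" using Li by simp
      have l: "L!i < j+2" using Li by simp
      have "{L!i, a} = {a, b}" by (rule K3[OF good_PO2[OF po] ab xab l ab(1) n e])
      then show False using Li by (auto simp: doubleton_eq_iff)
    qed
    then show ?thesis by simp
  qed
  have "continuous_map (subtopology (PT (j+2) (euclidean :: 'a topology)) (UA j a b)) (subtopology euclidean (UNIV - {p})) (\<lambda>x. x (L!i) - x a + p)"
    unfolding continuous_map_in_subtopology using c ne by blast
  then show "continuous_map (subtopology (PT (j+2) (euclidean :: 'a topology)) (UA j a b)) (subtopology euclidean (UNIV - {p})) (\<lambda>x. restrict (\<lambda>i. x (L!i) - x a + p) {..<j} i)"
    using i by simp
qed



lemma quotA: "quotient_map (subtopology (PT (j+2) euclidean) (PreA j)) (w (LA j) (euclidean::'a::real_normed_vector topology)) (sym_map (j+2))"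
  unfolding wA PreA_def using quotient_map_sym_sub[where k="j+2" and X=euclidean and S="{M. partition_of M = LA j}"] by simp

definition PreB :: "nat \<Rightarrow> 'a::real_normed_vector \<Rightarrow> (nat \<Rightarrow> 'a) set" where
  "PreB j p = {y \<in> topspace (PT j (subtopology euclidean (UNIV - {p}))). partition_of (sym_map j y) = replicate_mset j 1}"

lemma wB: "w (replicate_mset j 1) (subtopology euclidean (UNIV - {p::'a::real_normed_vector})) =
   subtopology (Sym j (subtopology euclidean (UNIV - {p}))) {N. partition_of N = replicate_mset j 1}"
  unfolding w_def by simp

lemma quotB: "quotient_map (subtopology (PT j (subtopology euclidean (UNIV - {p}))) (PreB j p))
   (w (replicate_mset j 1) (subtopology euclidean (UNIV - {p::'a::real_normed_vector}))) (sym_map j)"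
  unfolding wB PreB_def using quotient_map_sym_sub[where k=j and X="subtopology euclidean (UNIV - {p})" and S="{N. partition_of N = replicate_mset j 1}"] by simp

lemma fmap_cont:
  fixes p :: "'a::real_normed_vector"
  shows "continuous_map (w (LA j) (euclidean :: 'a topology)) (w (replicate_mset j 1) (subtopology euclidean (UNIV - {p}))) (fmap p)"
proof (rule continuous_compose_quotient_map[OF quotA])
  have cq: "continuous_map (subtopology (PT (j+2) (euclidean :: 'a topology)) (PreA j)) (Sym j (subtopology euclidean (UNIV - {p}))) (fmap p \<circ> sym_map (j+2))"
  proof (rule cont_local)
    fix x :: "nat \<Rightarrow> 'a" assume "x \<in> topspace (subtopology (PT (j+2) euclidean) (PreA j))"
    then have xP: "x \<in> PreA j" by simp
    obtain a b where ab: "a < j+2" "b < j+2" "a \<noteq> b" "x \<in> UA j a b" using UA_cover[OF xP] by blast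
    define L where "L = sorted_list_of_set ({..<j+2} - {a,b})"
    have c1: "continuous_map (subtopology (PT (j+2) (euclidean :: 'a topology)) (UA j a b)) (Sym j (subtopology euclidean (UNIV - {p})))
        (sym_map j \<circ> (\<lambda>x. restrict (\<lambda>i. x (L!i) - x a + p) {..<j}))"
      by (rule continuous_map_compose[OF T_cont[OF ab(1-3), of p, folded L_def] quotient_imp_continuous_map[OF quotient_map_sym]])
    have cc: "continuous_map (subtopology (PT (j+2) (euclidean :: 'a topology)) (UA j a b)) (Sym j (subtopology euclidean (UNIV - {p})))
        (fmap p \<circ> sym_map (j+2))"
    proof (rule continuous_map_eq[OF c1])
      fix y assume "y \<in> topspace (subtopology (PT (j+2) (euclidean :: 'a topology)) (UA j a b))"
      then have "y \<in> UA j a b" by simp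
      then show "(sym_map j \<circ> (\<lambda>x. restrict (\<lambda>i. x (L!i) - x a + p) {..<j})) y = (fmap p \<circ> sym_map (j+2)) y"
        using fmap_UA[OF _ ab(1-3), of y p] unfolding L_def by simp
    qed
    show "\<exists>U. openin (subtopology (PT (j+2) euclidean) (PreA j)) U \<and> x \<in> U \<and>
      continuous_map (subtopology (subtopology (PT (j+2) euclidean) (PreA j)) U) (Sym j (subtopology euclidean (UNIV - {p}))) (fmap p \<circ> sym_map (j+2))"
    proof (intro exI[of _ "UA j a b"] conjI)
      show "openin (subtopology (PT (j+2) euclidean) (PreA j)) (UA j a b)" by (rule UA_open[OF ab(1-3)])
      show "x \<in> UA j a b" by (rule ab(4))
      show "continuous_map (subtopology (subtopology (PT (j+2) euclidean) (PreA j)) (UA j a b)) (Sym j (subtopology euclidean (UNIV - {p}))) (fmap p \<circ> sym_map (j+2))"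
        unfolding subtop_UA by (rule cc)
    qed
  qed
  have im: "(fmap p \<circ> sym_map (j+2)) x \<in> {N. partition_of N = replicate_mset j 1}"
    if "x \<in> topspace (subtopology (PT (j+2) (euclidean :: 'a topology)) (PreA j))" for x
  proof -
    have "x \<in> PreA j" using that by simp
    then have "sym_map (j+2) x \<in> topspace (w (LA j) (euclidean :: 'a topology))"
      unfolding topA PreA_def by simp
    from fmap_top[OF this, of p] show ?thesis unfolding topB by simp
  qed
  show "continuous_map (subtopology (PT (j+2) euclidean) (PreA j)) (w (replicate_mset j 1) (subtopology euclidean (UNIV - {p}))) (fmap p \<circ> sym_map (j+2))"
    unfolding wB continuous_map_in_subtopology using cq im by blast
qed

definition gmap :: "'a \<Rightarrow> 'a multiset \<Rightarrow> 'a multiset" where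
  "gmap p N = N + {#p, p#}"

lemma gmap_top:
  fixes p :: "'a::real_normed_vector"
  assumes N: "N \<in> topspace (w (replicate_mset j 1) (subtopology euclidean (UNIV - {p})))"
  shows "gmap p N \<in> topspace (w (LA j) (euclidean :: 'a topology))"
proof -
  have N': "size N = j" "p \<notin># N" "partition_of N = replicate_mset j 1" using N unfolding topB by auto
  have c1: "count N x \<le> 1" for x using N'(3) unfolding PO1 by blast
  have "count (gmap p N) p = 2" using N'(2) by (simp add: gmap_def not_in_iff)
  moreover have "\<forall>x. x \<noteq> p \<longrightarrow> count (gmap p N) x \<le> 1" using c1 by (simp add: gmap_def)
  moreover have "size (gmap p N) = j + 2" using N'(1) by (simp add: gmap_def)
  ultimately have "partition_of (gmap p N) = LA j" by (rule PO2_conv)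
  then show ?thesis unfolding topA using \<open>size (gmap p N) = j + 2\<close> by blast
qed

lemma sym_map_ext:
  "sym_map (j+2) (restrict (\<lambda>i. if i < j then y i else p) {..<j+2}) = gmap p (sym_map j y)"
proof -
  have u: "[0..<j+2] = [0..<j] @ [j, Suc j]" by simp
  have m: "map (restrict (\<lambda>i. if i < j then y i else p) {..<j+2}) [0..<j] = map y [0..<j]"
    by (rule map_cong) auto
  have e: "map (restrict (\<lambda>i. if i < j then y i else p) {..<j+2}) [0..<j+2] = map y [0..<j] @ [p, p]"
    unfolding u map_append m by simp
  have "mset (map (restrict (\<lambda>i. if i < j then y i else p) {..<j+2}) [0..<j+2]) = mset (map y [0..<j]) + {#p, p#}"
    unfolding e by simp
  then show ?thesis unfolding sym_map_mset gmap_def .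
qed

lemma gmap_cont:
  fixes p :: "'a::real_normed_vector"
  shows "continuous_map (w (replicate_mset j 1) (subtopology euclidean (UNIV - {p}))) (w (LA j) (euclidean :: 'a topology)) (gmap p)"
proof (rule continuous_compose_quotient_map[OF quotB])
  let ?E = "\<lambda>y. restrict (\<lambda>i. if i < j then y i else p) {..<j+2}"
  have ce: "continuous_map (subtopology (PT j (subtopology euclidean (UNIV - {p}))) (PreB j p)) (PT (j+2) (euclidean :: 'a topology)) ?E"
    unfolding continuous_map_componentwise
  proof (intro conjI ballI)
    show "?E ` topspace (subtopology (PT j (subtopology euclidean (UNIV - {p}))) (PreB j p)) \<subseteq> extensional {..<j+2}" by auto
    fix i assume i: "i \<in> {..<j+2}"
    show "continuous_map (subtopology (PT j (subtopology euclidean (UNIV - {p}))) (PreB j p)) euclidean (\<lambda>y. ?E y i)"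
    proof (cases "i < j")
      case True
      have "continuous_map (PT j (subtopology euclidean (UNIV - {p}))) (subtopology euclidean (UNIV - {p})) (\<lambda>y. y i)"
        using True by (intro continuous_map_product_projection) simp
      then have "continuous_map (PT j (subtopology euclidean (UNIV - {p}))) euclidean (\<lambda>y. y i)"
        unfolding continuous_map_in_subtopology by blast
      then have "continuous_map (subtopology (PT j (subtopology euclidean (UNIV - {p}))) (PreB j p)) euclidean (\<lambda>y. y i)"
        by (rule continuous_map_from_subtopology)
      then show ?thesis using True i by simp
    next
      case False
      then show ?thesis using i by simp
    qed
  qed
  have c1: "continuous_map (subtopology (PT j (subtopology euclidean (UNIV - {p}))) (PreB j p)) (Sym (j+2) (euclidean :: 'a topology)) (sym_map (j+2) \<circ> ?E)"
    by (rule continuous_map_compose[OF ce quotient_imp_continuous_map[OF quotient_map_sym]])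
  have c2: "continuous_map (subtopology (PT j (subtopology euclidean (UNIV - {p}))) (PreB j p)) (Sym (j+2) (euclidean :: 'a topology)) (gmap p \<circ> sym_map j)"
    by (rule continuous_map_eq[OF c1]) (simp only: o_apply sym_map_ext)
  have im: "(gmap p \<circ> sym_map j) y \<in> {M. partition_of M = LA j}"
    if "y \<in> topspace (subtopology (PT j (subtopology euclidean (UNIV - {p}))) (PreB j p))" for y
  proof -
    have "y \<in> PreB j p" using that by simp
    then have "sym_map j y \<in> topspace (w (replicate_mset j 1) (subtopology euclidean (UNIV - {p})))"
      unfolding wB PreB_def by (auto simp: topspace_Sym set_sym_map PiE_def Pi_def)
    from gmap_top[OF this] show ?thesis unfolding topA by simp
  qed
  show "continuous_map (subtopology (PT j (subtopology euclidean (UNIV - {p}))) (PreB j p)) (w (LA j) (euclidean :: 'a topology)) (gmap p \<circ> sym_map j)"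
    unfolding wA continuous_map_in_subtopology using c2 im by blast
qed



lemma cm_scaleR:
  fixes g :: "'b \<Rightarrow> 'a::real_normed_vector"
  shows "continuous_map X euclideanreal f \<Longrightarrow> continuous_map X euclidean g \<Longrightarrow> continuous_map X euclidean (\<lambda>x. f x *\<^sub>R g x)"
  by (simp add: continuous_map_atin tendsto_scaleR)

definition hmap :: "'a::real_normed_vector \<Rightarrow> real \<times> 'a multiset \<Rightarrow> 'a multiset" where
  "hmap p z = image_mset (\<lambda>y. y + fst z *\<^sub>R (p - dbl (snd z))) (snd z)"

lemma hmap_top:
  fixes p :: "'a::real_normed_vector"
  assumes M: "M \<in> topspace (w (LA j) (euclidean :: 'a topology))"
  shows "hmap p (t, M) \<in> topspace (w (LA j) (euclidean :: 'a topology))"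
proof -
  have M': "size M = j + 2" "partition_of M = LA j" using M unfolding topA by auto
  have inj: "inj (\<lambda>y::'a. y + t *\<^sub>R (p - dbl M))" by (rule injI) simp
  have "partition_of (hmap p (t, M)) = LA j" unfolding hmap_def using PO_inj[OF inj] M'(2) by simp
  moreover have "size (hmap p (t, M)) = j + 2" unfolding hmap_def using M'(1) by simp
  ultimately show ?thesis unfolding topA by blast
qed

lemma loc01: "locally_compact_space (top_of_set {0..1::real})"
  by (rule compact_imp_locally_compact_space, rule compact_space_subtopology) (simp add: compactin_euclidean_iff)

lemma haus01: "Hausdorff_space (top_of_set {0..1::real})"
  by (rule Hausdorff_space_subtopology) simp

lemma hmap_cont:
  fixes p :: "'a::real_normed_vector"
  shows "continuous_map (prod_topology (top_of_set {0..1}) (w (LA j) (euclidean :: 'a topology))) (w (LA j) (euclidean :: 'a topology)) (hmap p)"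
proof (rule continuous_compose_quotient_map[OF quotient_map_prod_right[OF loc01 disjI1[OF haus01] quotA]])
  let ?PA = "subtopology (PT (j+2) (euclidean :: 'a topology)) (PreA j)"
  let ?Z = "prod_topology (top_of_set {0..1::real}) ?PA"
  let ?R = "\<lambda>z::real \<times> (nat \<Rightarrow> 'a). restrict (\<lambda>i. snd z i + fst z *\<^sub>R (p - dbl (sym_map (j+2) (snd z)))) {..<j+2}"
  have cR: "continuous_map ?Z (PT (j+2) (euclidean :: 'a topology)) ?R"
    unfolding continuous_map_componentwise
  proof (intro conjI ballI)
    show "?R ` topspace ?Z \<subseteq> extensional {..<j+2}" by auto
    fix i assume i: "i \<in> {..<j+2}"
    have c1: "continuous_map ?Z euclidean (\<lambda>z. snd z i)"
    proof -
      have "continuous_map ?PA euclidean (\<lambda>x::nat\<Rightarrow>'a. x i)"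
        using i by (intro continuous_map_from_subtopology continuous_map_product_projection) simp
      from continuous_map_compose[OF continuous_map_snd this] show ?thesis by (simp add: o_def)
    qed
    have c2: "continuous_map ?Z euclideanreal fst"
    proof -
      have "continuous_map ?Z (top_of_set {0..1::real}) fst" by (rule continuous_map_fst)
      then show ?thesis unfolding continuous_map_in_subtopology by blast
    qed
    have c3: "continuous_map ?Z euclidean (\<lambda>z. dbl (sym_map (j+2) (snd z)))"
    proof -
      from continuous_map_compose[OF continuous_map_snd C_cont] show ?thesis by (simp add: o_def)
    qed
    have "continuous_map ?Z euclidean (\<lambda>z. snd z i + fst z *\<^sub>R (p - dbl (sym_map (j+2) (snd z))))"
      by (intro continuous_map_add c1 cm_scaleR c2 continuous_map_diff c3) simp
    then show "continuous_map ?Z euclidean (\<lambda>z. ?R z i)" using i by simp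
  qed
  have c1: "continuous_map ?Z (Sym (j+2) (euclidean :: 'a topology)) (sym_map (j+2) \<circ> ?R)"
    by (rule continuous_map_compose[OF cR quotient_imp_continuous_map[OF quotient_map_sym]])
  have eq: "(sym_map (j+2) \<circ> ?R) z = (hmap p \<circ> (\<lambda>(x, y). (x, sym_map (j+2) y))) z" for z
  proof -
    obtain t x where z: "z = (t, x)" by (cases z)
    have "hmap p (t, sym_map (j+2) x) = image_mset (\<lambda>i. x i + t *\<^sub>R (p - dbl (sym_map (j+2) x))) (mset_set {..<j+2})"
      unfolding hmap_def sym_map_def by (simp add: multiset.map_comp o_def)
    also have "\<dots> = sym_map (j+2) (?R z)"
      unfolding sym_map_def z by (intro image_mset_cong) simp
    finally show ?thesis using z by simp
  qed
  have c2: "continuous_map ?Z (Sym (j+2) (euclidean :: 'a topology)) (hmap p \<circ> (\<lambda>(x, y). (x, sym_map (j+2) y)))"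
    by (rule continuous_map_eq[OF c1]) (rule eq)
  have im: "(hmap p \<circ> (\<lambda>(x, y). (x, sym_map (j+2) y))) z \<in> {M. partition_of M = LA j}"
    if "z \<in> topspace ?Z" for z
  proof -
    obtain t x where z: "z = (t, x)" by (cases z)
    have "x \<in> PreA j" using that z by simp
    then have "sym_map (j+2) x \<in> topspace (w (LA j) (euclidean :: 'a topology))"
      unfolding topA PreA_def by simp
    from hmap_top[OF this, of p t] show ?thesis using z unfolding topA by simp
  qed
  show "continuous_map ?Z (w (LA j) (euclidean :: 'a topology)) (hmap p \<circ> (\<lambda>(x, y). (x, sym_map (j+2) y)))"
    unfolding wA continuous_map_in_subtopology using c2 im by blast
qed



lemma hmap0: "hmap p (0, M) = M"
  by (simp add: hmap_def)

lemma hmap1: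
  fixes p :: "'a::real_normed_vector"
  assumes M: "M \<in> topspace (w (LA j) (euclidean :: 'a topology))"
  shows "hmap p (1, M) = gmap p (fmap p M)"
proof -
  have M': "partition_of M = LA j" using M unfolding topA by auto
  define c where "c = dbl M"
  have c2: "count M c = 2" using good_PO2[OF M'] by (simp add: c_def)
  have sub: "{#c, c#} \<subseteq># M" using c2 by (simp add: subseteq_mset_def)
  have MM: "M = (M - {#c, c#}) + {#c, c#}" by (rule subset_mset.diff_add[symmetric, OF sub])
  have "hmap p (1, M) = image_mset (\<lambda>y. y + (p - c)) M"
    by (simp add: hmap_def c_def)
  also have "\<dots> = image_mset (\<lambda>y. y - c + p) M"
    by (rule image_mset_cong) (simp add: algebra_simps)
  also have "\<dots> = image_mset (\<lambda>y. y - c + p) (M - {#c, c#}) + {#p, p#}"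
    by (subst MM) simp
  also have "\<dots> = gmap p (fmap p M)" by (simp add: gmap_def fmap_def c_def)
  finally show ?thesis .
qed

lemma fg_id:
  fixes p :: "'a::real_normed_vector"
  assumes N: "N \<in> topspace (w (replicate_mset j 1) (subtopology euclidean (UNIV - {p})))"
  shows "fmap p (gmap p N) = N"
proof -
  have N': "p \<notin># N" "partition_of N = replicate_mset j 1" using N unfolding topB by auto
  have c1: "count N x \<le> 1" for x using N'(2) unfolding PO1 by blast
  have "count (gmap p N) p = 2" using N'(1) by (simp add: gmap_def not_in_iff)
  moreover have "\<forall>x. x \<noteq> p \<longrightarrow> count (gmap p N) x \<le> 1" using c1 by (simp add: gmap_def)
  ultimately have d: "dbl (gmap p N) = p" by (rule dbl_eq)
  show ?thesis unfolding fmap_def d by (simp add: gmap_def)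
qed

theorem mainTheorem3:
  fixes j :: nat and p :: "complex ^ 'd"
  shows "(w (replicate_mset j 1 + {#2#}) (euclidean :: (complex ^ 'd) topology))
           homotopy_equivalent_space
         (w (replicate_mset j 1) (subtopology euclidean (UNIV - {p})))"
proof -
  have cf: "continuous_map (w (LA j) (euclidean :: (complex ^ 'd) topology)) (w (replicate_mset j 1) (subtopology euclidean (UNIV - {p}))) (fmap p)"
    by (rule fmap_cont)
  have cg: "continuous_map (w (replicate_mset j 1) (subtopology euclidean (UNIV - {p}))) (w (LA j) (euclidean :: (complex ^ 'd) topology)) (gmap p)"
    by (rule gmap_cont)
  have H: "homotopic_with (\<lambda>x. True) (w (LA j) (euclidean :: (complex ^ 'd) topology)) (w (LA j) euclidean)
      (\<lambda>M. hmap p (0, M)) (\<lambda>M. hmap p (1, M))"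
    unfolding homotopic_with_def by (intro exI[of _ "hmap p"] conjI hmap_cont) simp_all
  then have H': "homotopic_with (\<lambda>x. True) (w (LA j) (euclidean :: (complex ^ 'd) topology)) (w (LA j) euclidean)
      (\<lambda>M. hmap p (1, M)) (\<lambda>M. hmap p (0, M))"
    by (rule homotopic_with_symD)
  have h1: "homotopic_with (\<lambda>x. True) (w (LA j) (euclidean :: (complex ^ 'd) topology)) (w (LA j) euclidean) (gmap p \<circ> fmap p) id"
  proof (rule homotopic_with_eq[OF H'])
    fix M assume "M \<in> topspace (w (LA j) (euclidean :: (complex ^ 'd) topology))"
    then show "(gmap p \<circ> fmap p) M = hmap p (1, M)" "id M = hmap p (0, M)"
      by (simp_all add: hmap1 hmap0)
  qed simp
  have h2: "homotopic_with (\<lambda>x. True) (w (replicate_mset j 1) (subtopology euclidean (UNIV - {p})))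
      (w (replicate_mset j 1) (subtopology euclidean (UNIV - {p}))) (fmap p \<circ> gmap p) id"
    by (rule homotopic_with_equal[OF _ _ continuous_map_compose[OF cg cf]]) (simp_all add: fg_id)
  show ?thesis unfolding homotopy_equivalent_space_def using cf cg h1 h2 by blast
qed


end
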